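(* Let $\sigma_0,\sigma_\epsilon>0$, $\theta_0\in\mathbb{R}$. Let the prior be $\Theta\sim N(\theta_0,\sigma_0^2)$ and the signal $X=\Theta+\epsilon$ with $\epsilon\sim\mathrm{Cauchy}(0,\sigma_\epsilon)$ independent of $\Theta$. For $x\in\mathbb{R}$ put $x_0=(x-\theta_0)/\sigma_0$, $a=\sigma_\epsilon/\sigma_0$ and $z=(a+ix_0)/\sqrt2$. Then the posterior mean $\theta_1=\mathbb{E}[\Theta\mid X=x]$ equals $$\theta_1=x+\sigma_\epsilon\,\frac{\operatorname{Im}\{\operatorname{erfcx}(z)\}}{\operatorname{Re}\{\operatorname{erfcx}(z)\}},$$ where $\operatorname{erfcx}(z)=e^{z^2}\bigl(1-\frac{2}{\sqrt\pi}\int_0^z e^{-t^2}\,dt\bigr)$.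
   Context: $\mathrm{Cauchy}(\mu,s)$ has density $t\mapsto\frac{1}{\pi s[1+((t-\mu)/s)^2]}$. The posterior mean is $\theta_1=\frac{\int\theta f_\Theta(\theta)l_\epsilon(x-\theta)d\theta}{\int f_\Theta(\theta)l_\epsilon(x-\theta)d\theta}$ with $f_\Theta$ the prior density and $l_\epsilon$ the noise density; the integral in erfcx is along any path (the integrand is entire). *)

theory Defs
  imports "HOL-Probability.Probability" "HOL-Complex_Analysis.Complex_Analysis"
begin

definition cauchy_density :: "real \<Rightarrow> real \<Rightarrow> real \<Rightarrow> real" where
  "cauchy_density mu s t = 1 / (pi * s * (1 + ((t - mu) / s)^2))"

text \<open>Posterior mean of Theta given X = x, where X = Theta + noise, with prior density f
  and noise density l (Theta and noise independent).\<close>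
definition posterior_mean :: "(real \<Rightarrow> real) \<Rightarrow> (real \<Rightarrow> real) \<Rightarrow> real \<Rightarrow> real" where
  "posterior_mean f l x =
     (LINT \<theta>|lborel. \<theta> * f \<theta> * l (x - \<theta>)) / (LINT \<theta>|lborel. f \<theta> * l (x - \<theta>))"

text \<open>Scaled complementary error function; the integral from 0 to z is taken along the
  straight segment (the integrand is entire, so any path gives the same value).\<close>
definition erfcx :: "complex \<Rightarrow> complex" where
  "erfcx z = exp (z^2) * (1 - 2 / complex_of_real (sqrt pi) *
                contour_integral (linepath 0 z) (\<lambda>t. exp (- (t^2))))"

end

theory Submission
  imports Defs
begin

lemma FTC_Ioi:
  fixes f F :: "real \<Rightarrow> complex"
  assumes F: "\<And>t. t > 0 \<Longrightarrow> (F has_vector_derivative f t) (at t)"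
    and f: "\<And>t. t > 0 \<Longrightarrow> isCont f t"
    and fi: "set_integrable lborel {0<..} f"
    and A: "(F \<longlongrightarrow> A) (at_right 0)"
    and B: "(F \<longlongrightarrow> B) at_top"
  shows "(LINT t:{0<..}|lborel. f t) = B - A"
proof -
  have e: "einterval 0 \<infinity> = {0<..}"
    by (auto simp: einterval_def zero_ereal_def)
  have "(LBINT x=0..\<infinity>. f x) = B - A"
    apply (rule interval_integral_FTC_integrable[where F=F])
    using F f fi A B by (auto simp: e zero_ereal_def ereal_tendsto_simps)
  then show ?thesis by (simp add: interval_lebesgue_integral_def e)
qed

lemma FTC_Ioi_nonneg:
  fixes f F :: "real \<Rightarrow> real"
  assumes F: "\<And>t. t > 0 \<Longrightarrow> (F has_real_derivative f t) (at t)"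
    and f: "\<And>t. t > 0 \<Longrightarrow> isCont f t"
    and nn: "\<And>t. t > 0 \<Longrightarrow> f t \<ge> 0"
    and A: "(F \<longlongrightarrow> A) (at_right 0)"
    and B: "(F \<longlongrightarrow> B) at_top"
  shows "set_integrable lborel {0<..} f" "(LINT t:{0<..}|lborel. f t) = B - A"
proof -
  have e: "einterval 0 \<infinity> = {0<..}"
    by (auto simp: einterval_def zero_ereal_def)
  have *: "set_integrable lborel (einterval 0 \<infinity>) f" "(LBINT x=0..\<infinity>. f x) = B - A"
    by (rule interval_integral_FTC_nonneg[where F=F],
        use F f nn A B in \<open>auto simp: e zero_ereal_def ereal_tendsto_simps\<close>)+
  then show "set_integrable lborel {0<..} f" "(LINT t:{0<..}|lborel. f t) = B - A"
    by (simp_all add: interval_lebesgue_integral_def e)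
qed

lemma laplace_c:
  fixes c :: complex
  assumes c: "Re c > 0"
  shows "set_integrable lborel {0<..} (\<lambda>t. exp (- (of_real t * c)))"
    and "(LINT t:{0<..}|lborel. exp (- (of_real t * c))) = 1 / c"
proof -
  have "set_integrable lborel {0<..} (\<lambda>t. exp (- (t * Re c)))"
  proof (rule FTC_Ioi_nonneg(1)[where F="\<lambda>t. - exp (- (t * Re c)) / Re c"])
    show "((\<lambda>t. - exp (- (t * Re c)) / Re c) has_real_derivative exp (- (t * Re c))) (at t)" for t
      using c by (auto intro!: derivative_eq_intros simp: field_simps)
    show "((\<lambda>t. - exp (- (t * Re c)) / Re c) \<longlongrightarrow> - 1 / Re c) (at_right 0)"
      using c by (auto intro!: tendsto_eq_intros)
    show "((\<lambda>t. - exp (- (t * Re c)) / Re c) \<longlongrightarrow> 0) at_top"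
      using c by real_asymp
  qed auto
  then show si: "set_integrable lborel {0<..} (\<lambda>t. exp (- (of_real t * c)))"
    by (rule set_integrable_bound) (auto simp: set_borel_measurable_def)
  have c0: "c \<noteq> 0" using c by auto
  show "(LINT t:{0<..}|lborel. exp (- (of_real t * c))) = 1 / c"
  proof -
    have "(LINT t:{0<..}|lborel. exp (- (of_real t * c))) = 0 - (- 1 / c)"
    proof (rule FTC_Ioi[where F="\<lambda>t. - exp (- (of_real t * c)) / c"])
      show "((\<lambda>t. - exp (- (of_real t * c)) / c) has_vector_derivative exp (- (of_real t * c))) (at t)" for t
        using c0 by (auto intro!: derivative_eq_intros has_vector_derivative_real_field simp: field_simps)
      show "isCont (\<lambda>t. exp (- (complex_of_real t * c))) t" for t
        by (intro continuous_intros)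
      show "((\<lambda>t. - exp (- (complex_of_real t * c)) / c) \<longlongrightarrow> - 1 / c) (at_right 0)"
        using c0 by (auto intro!: tendsto_eq_intros)
      have L0: "((\<lambda>t. exp (- (complex_of_real t * c))) \<longlongrightarrow> 0) at_top"
      proof (rule tendsto_norm_zero_cancel)
        have "((\<lambda>t. exp (- (t * Re c))) \<longlongrightarrow> 0) at_top"
          using c by real_asymp
        then show "((\<lambda>t. norm (exp (- (complex_of_real t * c)))) \<longlongrightarrow> 0) at_top"
          by simp
      qed
      show "((\<lambda>t. - exp (- (complex_of_real t * c)) / c) \<longlongrightarrow> 0) at_top"
        using tendsto_divide_zero[OF tendsto_minus[OF L0, simplified], of c] by simp
    qed (use si in auto)
    then show ?thesis by simp
  qed
qed

lemma norm_dens_aff: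
  assumes "\<sigma> > 0"
  shows "normal_density \<mu> \<sigma> (\<mu> + \<sigma> * y) = std_normal_density y / \<sigma>"
  using assms by (simp add: normal_density_def real_sqrt_mult power_mult_distrib field_simps)

lemma char_normal:
  fixes \<sigma> \<mu> s :: real
  assumes s: "\<sigma> > 0"
  shows "integrable lborel (\<lambda>\<theta>. complex_of_real (normal_density \<mu> \<sigma> \<theta>) * exp (\<i> * of_real (s * \<theta>)))"
    and "(CLINT \<theta>|lborel. complex_of_real (normal_density \<mu> \<sigma> \<theta>) * exp (\<i> * of_real (s * \<theta>)))
         = exp (\<i> * of_real (s * \<mu>) - of_real (s^2 * \<sigma>^2 / 2))"
proof -
  show "integrable lborel (\<lambda>\<theta>. complex_of_real (normal_density \<mu> \<sigma> \<theta>) * exp (\<i> * of_real (s * \<theta>)))"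
    by (rule Bochner_Integration.integrable_bound[OF integrable_normal_density[THEN complex_of_real_integrable_eq[THEN iffD2]]])
       (use s in \<open>auto simp: norm_mult normal_density_nonneg\<close>)
  have ch: "(CLINT y|lborel. std_normal_density y *\<^sub>R iexp ((s * \<sigma>) * y)) = exp (- ((s*\<sigma>)^2) / 2)"
  proof -
    have "char std_normal_distribution (s * \<sigma>) = exp (- ((s*\<sigma>)^2) / 2)"
      by (simp add: char_std_normal_distribution)
    then show ?thesis
      unfolding char_def by (subst (asm) integral_density) (auto simp: normal_density_nonneg)
  qed
  have "(CLINT \<theta>|lborel. complex_of_real (normal_density \<mu> \<sigma> \<theta>) * exp (\<i> * of_real (s * \<theta>)))
      = \<bar>\<sigma>\<bar> *\<^sub>R (CLINT y|lborel. complex_of_real (normal_density \<mu> \<sigma> (\<mu> + \<sigma> * y)) * exp (\<i> * of_real (s * (\<mu> + \<sigma> * y))))"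
    using s by (intro lborel_integral_real_affine) auto
  also have "\<dots> = \<sigma> *\<^sub>R (CLINT y|lborel. (exp (\<i> * of_real (s * \<mu>)) / \<sigma>) * (std_normal_density y *\<^sub>R iexp ((s * \<sigma>) * y)))"
    using s by (intro arg_cong2[where f="(*\<^sub>R)"] Bochner_Integration.integral_cong)
      (auto simp: norm_dens_aff[OF s] norm_dens_aff[OF s, unfolded mult.commute[of \<sigma>]] distrib_left exp_add scaleR_conv_of_real algebra_simps)
  also have "\<dots> = \<sigma> *\<^sub>R ((exp (\<i> * of_real (s * \<mu>)) / \<sigma>) * (CLINT y|lborel. std_normal_density y *\<^sub>R iexp ((s * \<sigma>) * y)))"
    by (subst integral_mult_right_zero) (rule refl)
  also have "\<dots> = \<sigma> *\<^sub>R ((exp (\<i> * of_real (s * \<mu>)) / \<sigma>) * exp (- ((s*\<sigma>)^2) / 2))"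
    by (simp only: ch)
  also have "\<dots> = exp (\<i> * of_real (s * \<mu>) - of_real (s^2 * \<sigma>^2 / 2))"
  proof -
    have "\<sigma> *\<^sub>R ((exp (\<i> * of_real (s * \<mu>)) / \<sigma>) * exp (- ((s*\<sigma>)^2) / 2))
        = exp (\<i> * of_real (s * \<mu>)) * exp (- ((s*\<sigma>)^2) / 2)"
      using s by (simp add: scaleR_conv_of_real)
    also have "\<dots> = exp (\<i> * of_real (s * \<mu>)) / exp (of_real (s^2 * \<sigma>^2 / 2))"
    proof -
      have "exp (- ((s*\<sigma>)^2) / 2) = inverse (exp (s^2 * \<sigma>^2 / 2))"
        by (simp add: exp_minus[symmetric] power_mult_distrib)
      then have "complex_of_real (exp (- ((s*\<sigma>)^2) / 2)) = inverse (exp (of_real (s^2 * \<sigma>^2 / 2)))"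
        by (simp only: of_real_inverse exp_of_real)
      then show ?thesis by (simp only: divide_inverse)
    qed
    finally show ?thesis by (simp only: exp_diff)
  qed
  finally show "(CLINT \<theta>|lborel. complex_of_real (normal_density \<mu> \<sigma> \<theta>) * exp (\<i> * of_real (s * \<theta>)))
         = exp (\<i> * of_real (s * \<mu>) - of_real (s^2 * \<sigma>^2 / 2))" .
qed
lemma CI_eq:
  fixes z :: complex
  shows "contour_integral (linepath 0 z) (\<lambda>t. exp (- (t^2))) = (LINT \<mu>:{0..1}|lborel. z * exp (- ((of_real \<mu> * z)^2)))"
proof -
  have "contour_integral (linepath 0 z) (\<lambda>t. exp (- (t^2))) = integral {0..1} (\<lambda>\<mu>. z * exp (- ((of_real \<mu> * z)^2)))"
    by (simp add: contour_integral_integral linepath_def scaleR_conv_of_real mult.commute)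
  also have "\<dots> = (LINT \<mu>:{0..1}|lborel. z * exp (- ((of_real \<mu> * z)^2)))"
    by (rule set_borel_integral_eq_integral(2)[symmetric], rule borel_integrable_atLeastAtMost')
       (intro continuous_intros)
  finally show ?thesis .
qed

lemma Ioi_Ici:
  fixes f :: "real \<Rightarrow> 'b::{banach, second_countable_topology}"
  assumes [measurable]: "f \<in> borel_measurable lborel"
  shows "(LINT t:{0<..}|lborel. f t) = (LINT t:{0..}|lborel. f t)"
    and "set_integrable lborel {0<..} f = set_integrable lborel {0..} f"
proof -
  have ae: "AE t in lborel. indicator {0<..} t *\<^sub>R f t = indicator {0..} t *\<^sub>R f t"
    using AE_lborel_singleton[of 0] by eventually_elim (auto simp: indicator_def)
  show "(LINT t:{0<..}|lborel. f t) = (LINT t:{0..}|lborel. f t)"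
    unfolding set_lebesgue_integral_def by (rule integral_cong_AE) (use ae in auto)
  show "set_integrable lborel {0<..} f = set_integrable lborel {0..} f"
    unfolding set_integrable_def by (rule integrable_cong_AE) (use ae in auto)
qed

lemma gauss_half:
  shows "set_integrable lborel {0<..} (\<lambda>t. exp (- ((complex_of_real t)^2)))"
    and "(LINT t:{0<..}|lborel. exp (- ((complex_of_real t)^2))) = of_real (sqrt pi / 2)"
proof -
  have e: "exp (- ((complex_of_real t)^2)) = complex_of_real (exp (- (t^2)))" for t
    by (simp add: exp_of_real[symmetric])
  have hb: "has_bochner_integral lborel (\<lambda>x. indicator {0..} x *\<^sub>R exp (- x\<^sup>2)) (sqrt pi / 2)"
    by (rule gaussian_moment_0)
  have hb': "has_bochner_integral lborel (\<lambda>x. indicator {0..} x *\<^sub>R exp (- ((complex_of_real x)^2))) (of_real (sqrt pi / 2))"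
  proof -
    have "(\<lambda>x. indicator {0..} x *\<^sub>R exp (- ((complex_of_real x)^2))) = (\<lambda>x. of_real (indicator {0..} x *\<^sub>R exp (- x\<^sup>2)))"
      by (simp add: e scaleR_conv_of_real)
    then show ?thesis using has_bochner_integral_of_real[OF hb] by (simp only:)
  qed
  show "set_integrable lborel {0<..} (\<lambda>t. exp (- ((complex_of_real t)^2)))"
    using hb'[unfolded has_bochner_integral_iff] by (subst Ioi_Ici(2)) (auto simp: set_integrable_def)
  show "(LINT t:{0<..}|lborel. exp (- ((complex_of_real t)^2))) = of_real (sqrt pi / 2)"
    using hb'[unfolded has_bochner_integral_iff] by (subst Ioi_Ici(1)) (auto simp: set_lebesgue_integral_def)
qed

lemma bnd_g:
  fixes z :: complex
  assumes "Re z \<ge> 0" "0 \<le> \<mu>" "\<mu> \<le> 1" "0 \<le> t"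
  shows "norm (exp (- ((of_real t + of_real \<mu> * z)^2))) \<le> exp ((Im z)^2) * exp (- (t^2))"
proof -
  have "Re (- ((of_real t + of_real \<mu> * z)^2)) = - ((t + \<mu> * Re z)^2) + (\<mu> * Im z)^2"
    by (simp add: power2_eq_square algebra_simps)
  also have "\<dots> \<le> (Im z)^2 - t^2"
  proof -
    have "t^2 \<le> (t + \<mu> * Re z)^2" using assms by (intro power_mono) auto
    moreover have "(\<mu> * Im z)^2 \<le> (Im z)^2"
    proof -
      have "\<mu>^2 \<le> 1" using assms by (simp add: power_le_one)
      then show ?thesis using mult_right_mono[of "\<mu>^2" 1 "(Im z)^2"] by (simp add: power_mult_distrib)
    qed
    ultimately show ?thesis by linarith
  qed
  finally show ?thesis by (simp add: exp_add[symmetric])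
qed

lemma te_int: "set_integrable lborel {0<..} (\<lambda>t::real. t * exp (- (t^2)))"
proof -
  note X = FTC_Ioi_nonneg(1)[where F="\<lambda>t. - exp (- (t^2)) / 2" and f="\<lambda>t. t * exp (- (t^2))" and A="-1/2" and B=0]
  show ?thesis
  proof (rule X)
  show "((\<lambda>t. - exp (- (t^2)) / 2) has_real_derivative t * exp (- (t^2))) (at t)" for t
    by (auto intro!: derivative_eq_intros)
  show "((\<lambda>t::real. - exp (- (t^2)) / 2) \<longlongrightarrow> - 1 / (2::real)) (at_right 0)"
    by (auto intro!: tendsto_eq_intros)
  show "((\<lambda>t::real. - exp (- (t^2)) / 2) \<longlongrightarrow> (0::real)) at_top"
    by real_asymp
  qed auto
qed

lemma fubini_helper:
  fixes f :: "real \<Rightarrow> real \<Rightarrow> complex" and g h :: "real \<Rightarrow> real"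
  assumes meas: "(\<lambda>(x, y). f x y) \<in> borel_measurable (lborel \<Otimes>\<^sub>M lborel)"
    and bnd: "\<And>x y. norm (f x y) \<le> g x * h y"
    and gi: "integrable lborel g" and hi: "integrable lborel h"
    and g0: "\<And>x. g x \<ge> 0" and h0: "\<And>y. h y \<ge> 0"
  shows "(\<integral>y. (\<integral>x. f x y \<partial>lborel) \<partial>lborel) = (\<integral>x. (\<integral>y. f x y \<partial>lborel) \<partial>lborel)"
proof (rule lborel_pair.Fubini_integral)
  have m2: "(\<lambda>x. \<integral>y. norm (f x y) \<partial>lborel) \<in> borel_measurable lborel"
    by (rule sigma_finite_measure.borel_measurable_lebesgue_integral) (use meas in \<open>auto intro: sigma_finite_lborel\<close>)
  have ii: "integrable lborel (\<lambda>y. f x y)" for x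
  proof (rule Bochner_Integration.integrable_bound[where f="\<lambda>y. g x * h y"])
    show "integrable lborel (\<lambda>y. g x * h y)" using hi by simp
    show "(\<lambda>y. f x y) \<in> borel_measurable lborel"
      using meas by measurable
    show "AE y in lborel. norm (f x y) \<le> norm (g x * h y)"
      using bnd g0 h0 by (auto intro!: order_trans[OF bnd] simp: abs_mult)
  qed
  show "integrable (lborel \<Otimes>\<^sub>M lborel) (\<lambda>(x, y). f x y)"
  proof (rule lborel_pair.Fubini_integrable)
    show "(\<lambda>(x, y). f x y) \<in> borel_measurable (lborel \<Otimes>\<^sub>M lborel)" by (rule meas)
    show "AE x in lborel. integrable lborel (\<lambda>y. case (x, y) of (x, y) \<Rightarrow> f x y)"
      using ii by simp
    show "integrable lborel (\<lambda>x. \<integral>y. norm (case (x, y) of (x, y) \<Rightarrow> f x y) \<partial>lborel)"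
    proof (rule Bochner_Integration.integrable_bound[where f="\<lambda>x. g x * (\<integral>y. h y \<partial>lborel)"])
      show "integrable lborel (\<lambda>x. g x * (\<integral>y. h y \<partial>lborel))" using gi by simp
      show "(\<lambda>x. \<integral>y. norm (case (x, y) of (x, y) \<Rightarrow> f x y) \<partial>lborel) \<in> borel_measurable lborel"
        using m2 by simp
      have "norm (\<integral>y. norm (f x y) \<partial>lborel) \<le> norm (g x * (\<integral>y. h y \<partial>lborel))" for x
      proof -
        have "norm (\<integral>y. norm (f x y) \<partial>lborel) = (\<integral>y. norm (f x y) \<partial>lborel)"
          by (simp add: integral_nonneg_AE)
        also have "\<dots> \<le> (\<integral>y. g x * h y \<partial>lborel)"
          by (rule integral_mono) (use ii hi bnd in auto)
        also have "\<dots> = g x * (\<integral>y. h y \<partial>lborel)" by simp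
        also have "\<dots> \<le> norm (g x * (\<integral>y. h y \<partial>lborel))" by simp
        finally show ?thesis .
      qed
      then show "AE x in lborel. norm (\<integral>y. norm (case (x, y) of (x, y) \<Rightarrow> f x y) \<partial>lborel) \<le> norm (g x * (\<integral>y. h y \<partial>lborel))"
        by simp
    qed
  qed
qed

lemma gauss_shift:
  fixes z :: complex
  assumes z: "Re z \<ge> 0"
  shows "set_integrable lborel {0<..} (\<lambda>t. exp (- ((of_real t + z)^2)))"
    and "(LINT t:{0<..}|lborel. exp (- ((of_real t + z)^2)))
           = of_real (sqrt pi / 2) - contour_integral (linepath 0 z) (\<lambda>t. exp (- (t^2)))"
proof -
  define g where "g \<mu> t = exp (- ((complex_of_real t + of_real \<mu> * z)^2))" for \<mu> t :: real
  define H where "H \<mu> t = - 2 * z * (of_real t + of_real \<mu> * z) * g \<mu> t" for \<mu> t :: real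
  define Hf where "Hf \<mu> t = indicator {0..1} \<mu> *\<^sub>R (indicator {0<..} t *\<^sub>R H \<mu> t)" for \<mu> t :: real
  define C where "C = exp ((Im z)^2)"
  have C0: "C > 0" by (simp add: C_def)
  have gb: "norm (g \<mu> t) \<le> C * exp (- (t^2))" if "0 \<le> \<mu>" "\<mu> \<le> 1" "0 \<le> t" for \<mu> t
    unfolding g_def C_def by (rule bnd_g) (use z that in auto)
  have Hb: "norm (H \<mu> t) \<le> 2 * norm z * C * (t * exp (- (t^2))) + 2 * norm z * norm z * C * exp (- (t^2))"
    if "0 \<le> \<mu>" "\<mu> \<le> 1" "0 \<le> t" for \<mu> t
  proof -
    have n1: "norm (complex_of_real t + of_real \<mu> * z) \<le> t + norm z"
    proof -
      have "norm (complex_of_real t + of_real \<mu> * z) \<le> norm (complex_of_real t) + norm (of_real \<mu> * z)"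
        by (rule norm_triangle_ineq)
      also have "\<dots> \<le> t + norm z"
        using that by (auto simp: norm_mult intro!: mult_left_le_one_le)
      finally show ?thesis .
    qed
    have "norm (H \<mu> t) = 2 * norm z * norm (complex_of_real t + of_real \<mu> * z) * norm (g \<mu> t)"
      by (simp add: H_def norm_mult)
    also have "\<dots> \<le> 2 * norm z * (t + norm z) * (C * exp (- (t^2)))"
      by (intro mult_mono mult_left_mono n1 gb that) (use that in auto)
    also have "\<dots> = 2 * norm z * C * (t * exp (- (t^2))) + 2 * norm z * norm z * C * exp (- (t^2))"
      by (simp add: algebra_simps)
    finally show ?thesis .
  qed
  have ie: "set_integrable lborel {0<..} (\<lambda>t::real. exp (- (t^2)))"
  proof -
    have "integrable lborel (\<lambda>x::real. indicator {0..} x *\<^sub>R exp (- x\<^sup>2))"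
      using gaussian_moment_0[unfolded has_bochner_integral_iff] by (rule conjunct1)
    then show ?thesis by (subst Ioi_Ici(2)) (auto simp: set_integrable_def)
  qed
  define hB where "hB t = indicator {0<..} t * (2 * norm z * C * (t * exp (- (t^2))) + 2 * norm z * norm z * C * exp (- (t^2)))" for t :: real
  have hBi: "integrable lborel hB"
  proof -
    have "integrable lborel (\<lambda>t. 2 * norm z * C * (indicator {0<..} t * (t * exp (- (t^2)))) + 2 * norm z * norm z * C * (indicator {0<..} t * exp (- (t^2))))"
      using te_int ie by (intro Bochner_Integration.integrable_add Bochner_Integration.integrable_mult_right) (auto simp: set_integrable_def)
    then show ?thesis
      by (rule Bochner_Integration.integrable_cong[THEN iffD1, rotated -1]) (auto simp: hB_def algebra_simps)
  qed
  have hB0: "hB t \<ge> 0" for t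
    using C0 by (auto simp: hB_def indicator_def)
  have Hfb: "norm (Hf \<mu> t) \<le> indicator {0..1} \<mu> * hB t" for \<mu> t
    using Hb[of \<mu> t] by (auto simp: Hf_def hB_def indicator_def)
  have meas: "(\<lambda>(\<mu>, t). Hf \<mu> t) \<in> borel_measurable (lborel \<Otimes>\<^sub>M lborel)"
    unfolding Hf_def H_def g_def by measurable
  have fub: "(\<integral>t. (\<integral>\<mu>. Hf \<mu> t \<partial>lborel) \<partial>lborel) = (\<integral>\<mu>. (\<integral>t. Hf \<mu> t \<partial>lborel) \<partial>lborel)"
    by (rule fubini_helper[OF meas Hfb]) (use hBi hB0 in \<open>auto simp: indicator_pos_le\<close>)
  show gi: "set_integrable lborel {0<..} (\<lambda>t. exp (- ((of_real t + z)^2)))"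
  proof (rule set_integrable_bound[where f="\<lambda>t. C * exp (- (t^2))"])
    show "set_integrable lborel {0<..} (\<lambda>t. C * exp (- (t^2)))" using ie by simp
    show "set_borel_measurable lborel {0<..} (\<lambda>t. exp (- ((of_real t + z)^2)))"
      unfolding set_borel_measurable_def by measurable
    show "AE t in lborel. t \<in> {0<..} \<longrightarrow> norm (exp (- ((of_real t + z)^2))) \<le> norm (C * exp (- (t^2)))"
    proof (rule AE_I2, rule impI)
      fix t :: real assume t: "t \<in> {0<..}"
      have "norm (g 1 t) \<le> C * exp (- (t^2))" by (rule gb) (use t in auto)
      then show "norm (exp (- ((of_real t + z)^2))) \<le> norm (C * exp (- (t^2)))"
        using C0 by (simp add: g_def)
    qed
  qed
  have Hi: "set_integrable lborel {0<..} (H \<mu>)" if "0 \<le> \<mu>" "\<mu> \<le> 1" for \<mu>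
  proof (rule set_integrable_bound[where f="\<lambda>t. 2 * norm z * C * (t * exp (- (t^2))) + 2 * norm z * norm z * C * exp (- (t^2))"])
    show "set_integrable lborel {0<..} (\<lambda>t. 2 * norm z * C * (t * exp (- (t^2))) + 2 * norm z * norm z * C * exp (- (t^2)))"
      using te_int ie by (intro set_integral_add(1) set_integrable_mult_right)
    show "set_borel_measurable lborel {0<..} (H \<mu>)"
      unfolding set_borel_measurable_def H_def g_def by measurable
    show "AE t in lborel. t \<in> {0<..} \<longrightarrow> norm (H \<mu> t) \<le> norm (2 * norm z * C * (t * exp (- (t^2))) + 2 * norm z * norm z * C * exp (- (t^2)))"
    proof (rule AE_I2, rule impI)
      fix t :: real assume t: "t \<in> {0<..}"
      show "norm (H \<mu> t) \<le> norm (2 * norm z * C * (t * exp (- (t^2))) + 2 * norm z * norm z * C * exp (- (t^2)))"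
        by (rule order_trans[OF Hb[OF that]]) (use t in auto)
    qed
  qed
  have L: "(\<integral>t. (\<integral>\<mu>. Hf \<mu> t \<partial>lborel) \<partial>lborel)
      = (LINT t:{0<..}|lborel. exp (- ((of_real t + z)^2))) - of_real (sqrt pi / 2)"
  proof -
    have inner: "(\<integral>\<mu>. Hf \<mu> t \<partial>lborel) = indicator {0<..} t *\<^sub>R (g 1 t - g 0 t)" for t
    proof -
      have "(\<integral>\<mu>. Hf \<mu> t \<partial>lborel) = (\<integral>\<mu>. indicator {0<..} t *\<^sub>R (indicator {0..1} \<mu> *\<^sub>R H \<mu> t) \<partial>lborel)"
        unfolding Hf_def by (rule Bochner_Integration.integral_cong) (simp_all only: scaleR_left_commute)
      also have "\<dots> = indicator {0<..} t *\<^sub>R (\<integral>\<mu>. indicator {0..1} \<mu> *\<^sub>R H \<mu> t \<partial>lborel)"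
        by (rule integral_scaleR_right)
      also have "(\<integral>\<mu>. indicator {0..1} \<mu> *\<^sub>R H \<mu> t \<partial>lborel) = (LBINT \<mu>=ereal 0..ereal 1. H \<mu> t)"
        using interval_integral_Icc[of 0 1 "\<lambda>\<mu>. H \<mu> t"] by (simp add: set_lebesgue_integral_def)
      also have "\<dots> = g 1 t - g 0 t"
      proof (rule interval_integral_FTC_finite)
        show "continuous_on {min 0 1..max 0 1} (\<lambda>\<mu>. H \<mu> t)"
          unfolding H_def g_def by (intro continuous_intros)
        show "((\<lambda>\<mu>. g \<mu> t) has_vector_derivative H x t) (at x within {min 0 1..max 0 1})" for x
          unfolding H_def g_def
          by (rule has_vector_derivative_at_within)
             (auto intro!: derivative_eq_intros has_vector_derivative_real_field simp: algebra_simps)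
      qed
      finally show ?thesis .
    qed
    have "(\<integral>t. (\<integral>\<mu>. Hf \<mu> t \<partial>lborel) \<partial>lborel) = (LINT t:{0<..}|lborel. g 1 t - g 0 t)"
      by (simp add: inner set_lebesgue_integral_def)
    also have "\<dots> = (LINT t:{0<..}|lborel. g 1 t) - (LINT t:{0<..}|lborel. g 0 t)"
      using gi gauss_half(1) by (intro set_integral_diff(2)) (auto simp: g_def)
    also have "\<dots> = (LINT t:{0<..}|lborel. exp (- ((of_real t + z)^2))) - of_real (sqrt pi / 2)"
      using gauss_half(2) by (simp add: g_def)
    finally show ?thesis .
  qed
  have R: "(\<integral>\<mu>. (\<integral>t. Hf \<mu> t \<partial>lborel) \<partial>lborel) = - contour_integral (linepath 0 z) (\<lambda>t. exp (- (t^2)))"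
  proof -
    have inner: "(\<integral>t. Hf \<mu> t \<partial>lborel) = indicator {0..1} \<mu> *\<^sub>R (- (z * exp (- ((of_real \<mu> * z)^2))))" for \<mu>
    proof (cases "\<mu> \<in> {0..1}")
      case False
      then show ?thesis by (simp add: Hf_def)
    next
      case True
      then have m: "0 \<le> \<mu>" "\<mu> \<le> 1" by auto
      have "(\<integral>t. Hf \<mu> t \<partial>lborel) = (LINT t:{0<..}|lborel. H \<mu> t)"
        using True by (simp add: Hf_def set_lebesgue_integral_def)
      also have "\<dots> = 0 - z * g \<mu> 0"
      proof (rule FTC_Ioi[where F="\<lambda>t. z * g \<mu> t"])
        show "((\<lambda>t. z * g \<mu> t) has_vector_derivative H \<mu> t) (at t)" for t
          unfolding H_def g_def
          by (auto intro!: derivative_eq_intros has_vector_derivative_real_field simp: algebra_simps)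
        show "isCont (H \<mu>) t" for t
          unfolding H_def g_def by (intro continuous_intros)
        show "set_integrable lborel {0<..} (H \<mu>)" by (rule Hi[OF m])
        have "isCont (\<lambda>t. z * g \<mu> t) 0"
          unfolding g_def by (intro continuous_intros)
        then show "((\<lambda>t. z * g \<mu> t) \<longlongrightarrow> z * g \<mu> 0) (at_right 0)"
          unfolding isCont_def by (rule tendsto_mono[OF at_within_le_at])
        show "((\<lambda>t. z * g \<mu> t) \<longlongrightarrow> 0) at_top"
        proof (rule Lim_null_comparison)
          show "\<forall>\<^sub>F t in at_top. norm (z * g \<mu> t) \<le> norm z * C * exp (- (t^2))"
            using eventually_ge_at_top[of 0]
            by eventually_elim (use gb[OF m] in \<open>auto simp: norm_mult mult.assoc intro!: mult_left_mono\<close>)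
          have "((\<lambda>t::real. exp (- (t^2))) \<longlongrightarrow> 0) at_top" by real_asymp
          then show "((\<lambda>t. norm z * C * exp (- (t^2))) \<longlongrightarrow> 0) at_top"
            by (rule tendsto_mult_right_zero)
        qed
      qed
      also have "\<dots> = indicator {0..1} \<mu> *\<^sub>R (- (z * exp (- ((of_real \<mu> * z)^2))))"
        using True by (simp add: g_def)
      finally show ?thesis .
    qed
    have "(\<integral>\<mu>. (\<integral>t. Hf \<mu> t \<partial>lborel) \<partial>lborel) = (LINT \<mu>:{0..1}|lborel. - (z * exp (- ((of_real \<mu> * z)^2))))"
      by (simp add: inner set_lebesgue_integral_def)
    also have "\<dots> = - (LINT \<mu>:{0..1}|lborel. z * exp (- ((of_real \<mu> * z)^2)))"
      by (simp only: set_lebesgue_integral_def scaleR_minus_right integral_minus)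
    also have "\<dots> = - contour_integral (linepath 0 z) (\<lambda>t. exp (- (t^2)))"
      by (simp add: CI_eq)
    finally show ?thesis .
  qed
  show "(LINT t:{0<..}|lborel. exp (- ((of_real t + z)^2)))
           = of_real (sqrt pi / 2) - contour_integral (linepath 0 z) (\<lambda>t. exp (- (t^2)))"
    using fub L R by (simp add: algebra_simps)
qed


theorem mainTheorem5:
  fixes \<sigma>0 \<sigma>\<epsilon> \<theta>0 x :: real
  assumes "\<sigma>0 > 0" and "\<sigma>\<epsilon> > 0"
  defines "x0 \<equiv> (x - \<theta>0) / \<sigma>0"
      and "a \<equiv> \<sigma>\<epsilon> / \<sigma>0"
  defines "z \<equiv> Complex a x0 / complex_of_real (sqrt 2)"
  shows "posterior_mean (normal_density \<theta>0 \<sigma>0) (cauchy_density 0 \<sigma>\<epsilon>) x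
           = x + \<sigma>\<epsilon> * Im (erfcx z) / Re (erfcx z)"
proof -
  note s0 = \<open>\<sigma>0 > 0\<close> and se = \<open>\<sigma>\<epsilon> > 0\<close>
  define N where "N = normal_density \<theta>0 \<sigma>0"
  define k where "k = sqrt 2 / \<sigma>0"
  define c where "c \<theta> = complex_of_real \<sigma>\<epsilon> + \<i> * complex_of_real (x - \<theta>)" for \<theta>
  define J where "J = (CLINT \<theta>|lborel. of_real (N \<theta>) / c \<theta>)"
  define Cd where "Cd \<theta> = cauchy_density 0 \<sigma>\<epsilon> (x - \<theta>)" for \<theta>
  have kpos: "k > 0" using s0 by (simp add: k_def)
  have c0: "c \<theta> \<noteq> 0" for \<theta> using se by (auto simp: c_def complex_eq_iff)
  have N0: "N \<theta> \<ge> 0" for \<theta> using s0 by (simp add: N_def normal_density_nonneg)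
  have Nint: "integrable lborel N" using s0 by (simp add: N_def)
  have Nm[measurable]: "N \<in> borel_measurable borel" by (simp add: N_def)
  have cm: "norm (c \<theta>) \<ge> \<sigma>\<epsilon>" for \<theta>
    using abs_Re_le_cmod[of "c \<theta>"] se by (simp add: c_def)
  have Ji: "integrable lborel (\<lambda>\<theta>. of_real (N \<theta>) / c \<theta>)"
  proof (rule Bochner_Integration.integrable_bound[where f="\<lambda>\<theta>. N \<theta> / \<sigma>\<epsilon>"])
    show "integrable lborel (\<lambda>\<theta>. N \<theta> / \<sigma>\<epsilon>)" using Nint by simp
    show "(\<lambda>\<theta>. complex_of_real (N \<theta>) / c \<theta>) \<in> borel_measurable lborel"
      unfolding c_def by measurable
    show "AE \<theta> in lborel. norm (complex_of_real (N \<theta>) / c \<theta>) \<le> norm (N \<theta> / \<sigma>\<epsilon>)"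
    proof (rule AE_I2)
      fix \<theta>
      have "norm (complex_of_real (N \<theta>) / c \<theta>) = N \<theta> / norm (c \<theta>)"
        using N0[of \<theta>] by (simp add: norm_divide)
      also have "\<dots> \<le> N \<theta> / \<sigma>\<epsilon>"
        using N0[of \<theta>] cm[of \<theta>] se by (intro divide_left_mono) (auto intro!: mult_pos_pos)
      finally show "norm (complex_of_real (N \<theta>) / c \<theta>) \<le> norm (N \<theta> / \<sigma>\<epsilon>)"
        using N0[of \<theta>] se by simp
    qed
  qed
  have cdD: "Cd \<theta> = \<sigma>\<epsilon> / (pi * (\<sigma>\<epsilon>^2 + (x - \<theta>)^2))" for \<theta>
  proof -
    have "1 + ((x - \<theta> - 0) / \<sigma>\<epsilon>)^2 = (\<sigma>\<epsilon>^2 + (x - \<theta>)^2) / \<sigma>\<epsilon>^2"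
      using se by (simp add: field_simps power_divide)
    then show ?thesis using se by (simp add: Cd_def cauchy_density_def power2_eq_square)
  qed
  have ReD: "Re (of_real (N \<theta>) / c \<theta>) = N \<theta> * \<sigma>\<epsilon> / (\<sigma>\<epsilon>^2 + (x - \<theta>)^2)" for \<theta>
    by (simp add: c_def Re_divide cmod_def power2_eq_square)
  have ImD: "Im (of_real (N \<theta>) / c \<theta>) = N \<theta> * (\<theta> - x) / (\<sigma>\<epsilon>^2 + (x - \<theta>)^2)" for \<theta>
    by (simp add: c_def Im_divide cmod_def power2_eq_square minus_divide_left[symmetric] algebra_simps)
  have Dpos: "\<sigma>\<epsilon>^2 + (x - \<theta>)^2 > 0" for \<theta> using se by (simp add: add_pos_nonneg)
  have cd1: "N \<theta> * Cd \<theta> = Re (of_real (N \<theta>) / c \<theta>) / pi" for \<theta>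
    using Dpos[of \<theta>] by (simp add: cdD ReD field_simps)
  have cd2: "\<theta> * N \<theta> * Cd \<theta> = x * (N \<theta> * Cd \<theta>) + \<sigma>\<epsilon> * Im (of_real (N \<theta>) / c \<theta>) / pi" for \<theta>
  proof -
    have gen: "\<theta> * N \<theta> * (\<sigma>\<epsilon> / (pi * D)) = x * (N \<theta> * (\<sigma>\<epsilon> / (pi * D))) + \<sigma>\<epsilon> * (N \<theta> * (\<theta> - x) / D) / pi"
      if "D > 0" for D :: real
      using that by (simp add: field_simps)
    show ?thesis unfolding cdD ImD by (rule gen[OF Dpos])
  qed
  have i1: "integrable lborel (\<lambda>\<theta>. N \<theta> * Cd \<theta>)"
    using Ji by (simp add: cd1)
  have i2: "integrable lborel (\<lambda>\<theta>. \<sigma>\<epsilon> * Im (of_real (N \<theta>) / c \<theta>) / pi)"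
    using Ji by simp
  have den: "(LINT \<theta>|lborel. N \<theta> * Cd \<theta>) = Re J / pi"
    using Ji by (simp add: cd1 J_def)
  have num: "(LINT \<theta>|lborel. \<theta> * N \<theta> * Cd \<theta>) = x * (Re J / pi) + \<sigma>\<epsilon> * Im J / pi"
  proof -
    have "(LINT \<theta>|lborel. \<theta> * N \<theta> * Cd \<theta>) = (LINT \<theta>|lborel. x * (N \<theta> * Cd \<theta>) + \<sigma>\<epsilon> * Im (of_real (N \<theta>) / c \<theta>) / pi)"
      by (simp only: cd2)
    also have "\<dots> = x * (LINT \<theta>|lborel. N \<theta> * Cd \<theta>) + (LINT \<theta>|lborel. \<sigma>\<epsilon> * Im (of_real (N \<theta>) / c \<theta>) / pi)"
      using i1 i2 by simp
    also have "\<dots> = x * (Re J / pi) + \<sigma>\<epsilon> * Im J / pi"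
      using Ji by (simp add: den J_def)
    finally show ?thesis .
  qed
  have Jeq: "J = of_real (k * sqrt pi / 2) * erfcx z"
  proof -
    have s2: "sqrt 2 * sqrt 2 = (2::real)" by simp
    have kk: "k^2 * \<sigma>0^2 = 2" using s0 by (simp add: k_def power_divide)
    have zk: "z = of_real (k / 2) * (of_real \<sigma>\<epsilon> + \<i> * of_real (x - \<theta>0))"
      using s0 s2 by (simp add: z_def a_def x0_def k_def complex_eq_iff field_simps)
    have Rez: "Re z \<ge> 0" using se kpos by (simp add: zk)
    have Rekc: "Re (of_real k * c \<theta>) > 0" for \<theta> using kpos se by (simp add: c_def)
    define f where "f \<theta> t = indicator {0<..} t *\<^sub>R (complex_of_real (N \<theta>) * exp (- (of_real t * (of_real k * c \<theta>))))" for \<theta> t :: real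
    have lap: "of_real (N \<theta>) / c \<theta> = of_real k * (\<integral>t. f \<theta> t \<partial>lborel)" for \<theta>
    proof -
      have "(\<integral>t. f \<theta> t \<partial>lborel) = of_real (N \<theta>) * (LINT t:{0<..}|lborel. exp (- (of_real t * (of_real k * c \<theta>))))"
        unfolding f_def set_lebesgue_integral_def
        by (subst integral_mult_right_zero[symmetric]) (simp add: scaleR_conv_of_real mult_ac)
      also have "\<dots> = of_real (N \<theta>) / (of_real k * c \<theta>)"
        using laplace_c(2)[OF Rekc[of \<theta>]] by simp
      finally show ?thesis using kpos c0[of \<theta>] by (simp add: field_simps)
    qed
    have J1: "J = of_real k * (\<integral>\<theta>. (\<integral>t. f \<theta> t \<partial>lborel) \<partial>lborel)"
      unfolding J_def lap by (rule integral_mult_right_zero)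
    have hi: "integrable lborel (\<lambda>t. indicator {0<..} t * exp (- (t * (k * \<sigma>\<epsilon>))))"
    proof -
      have "set_integrable lborel {0<..} (\<lambda>t. exp (- (of_real t * complex_of_real (k * \<sigma>\<epsilon>))))"
        using kpos se by (intro laplace_c(1)) simp
      then have "integrable lborel (\<lambda>t. norm (indicator {0<..} t *\<^sub>R exp (- (of_real t * complex_of_real (k * \<sigma>\<epsilon>)))))"
        unfolding set_integrable_def by (rule integrable_norm)
      then show ?thesis
        by (rule Bochner_Integration.integrable_cong[THEN iffD1, rotated -1]) (auto simp: indicator_def)
    qed
    have fb: "norm (f \<theta> t) \<le> N \<theta> * (indicator {0<..} t * exp (- (t * (k * \<sigma>\<epsilon>))))" for \<theta> t
      using N0[of \<theta>] by (auto simp: f_def c_def norm_mult indicator_def)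
    have fm: "(\<lambda>(\<theta>, t). f \<theta> t) \<in> borel_measurable (lborel \<Otimes>\<^sub>M lborel)"
      unfolding f_def c_def by measurable
    have fub: "(\<integral>\<theta>. (\<integral>t. f \<theta> t \<partial>lborel) \<partial>lborel) = (\<integral>t. (\<integral>\<theta>. f \<theta> t \<partial>lborel) \<partial>lborel)"
      by (rule fubini_helper[OF fm fb, symmetric]) (use Nint hi N0 in \<open>auto simp: indicator_pos_le\<close>)
    have inner: "(\<integral>\<theta>. f \<theta> t \<partial>lborel) = indicator {0<..} t *\<^sub>R (exp (z^2) * exp (- ((of_real t + z)^2)))" for t
    proof -
      define E1 where "E1 = exp (- (of_real t * of_real k * (of_real \<sigma>\<epsilon> + \<i> * of_real x)))"
      have fe: "f \<theta> t = indicator {0<..} t *\<^sub>R (E1 * (complex_of_real (N \<theta>) * exp (\<i> * of_real ((t * k) * \<theta>))))" for \<theta>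
      proof -
        have "exp (- (of_real t * (of_real k * c \<theta>))) = E1 * exp (\<i> * of_real ((t * k) * \<theta>))"
          unfolding E1_def c_def by (subst exp_add[symmetric]) (simp add: algebra_simps)
        then show ?thesis by (simp add: f_def mult_ac)
      qed
      have "(\<integral>\<theta>. f \<theta> t \<partial>lborel) = indicator {0<..} t *\<^sub>R (E1 * (CLINT \<theta>|lborel. complex_of_real (N \<theta>) * exp (\<i> * of_real ((t * k) * \<theta>))))"
        by (simp only: fe integral_scaleR_right integral_mult_right_zero)
      also have "\<dots> = indicator {0<..} t *\<^sub>R (E1 * exp (\<i> * of_real ((t * k) * \<theta>0) - of_real ((t * k)^2 * \<sigma>0^2 / 2)))"
        unfolding N_def using char_normal(2)[OF s0, of \<theta>0 "t * k"] by simp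
      also have "E1 * exp (\<i> * of_real ((t * k) * \<theta>0) - of_real ((t * k)^2 * \<sigma>0^2 / 2)) = exp (z^2) * exp (- ((of_real t + z)^2))"
      proof -
        have "(t * k)^2 * \<sigma>0^2 / 2 = t^2" using kk by (simp add: power_mult_distrib)
        have kkc: "complex_of_real \<sigma>0 * (complex_of_real \<sigma>0 * (complex_of_real k * complex_of_real k)) = 2"
        proof -
          have "\<sigma>0 * (\<sigma>0 * (k * k)) = 2" using kk by (simp add: power2_eq_square mult_ac)
          then have "complex_of_real (\<sigma>0 * (\<sigma>0 * (k * k))) = 2" by simp
          then show ?thesis by simp
        qed
        have "- (of_real t * of_real k * (of_real \<sigma>\<epsilon> + \<i> * of_real x)) + (\<i> * of_real ((t * k) * \<theta>0) - of_real ((t * k)^2 * \<sigma>0^2 / 2))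
             = z^2 + - ((of_real t + z)^2)"
          by (simp add: zk power2_eq_square algebra_simps kkc)
        then show ?thesis unfolding E1_def by (simp only: exp_add[symmetric])
      qed
      finally show ?thesis .
    qed
    have "J = of_real k * (\<integral>t. indicator {0<..} t *\<^sub>R (exp (z^2) * exp (- ((of_real t + z)^2))) \<partial>lborel)"
      by (simp only: J1 fub inner)
    also have "\<dots> = of_real k * (exp (z^2) * (LINT t:{0<..}|lborel. exp (- ((of_real t + z)^2))))"
      unfolding set_lebesgue_integral_def
      by (subst integral_mult_right_zero[symmetric]) (simp add: scaleR_conv_of_real mult_ac)
    also have "\<dots> = of_real k * (exp (z^2) * (of_real (sqrt pi / 2) - contour_integral (linepath 0 z) (\<lambda>t. exp (- (t^2)))))"
      by (simp only: gauss_shift(2)[OF Rez])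
    also have "\<dots> = of_real (k * sqrt pi / 2) * erfcx z"
      by (simp add: erfcx_def field_simps)
    finally show ?thesis .
  qed
  have denpos: "(LINT \<theta>|lborel. N \<theta> * Cd \<theta>) > 0"
  proof -
    have pos: "N \<theta> * Cd \<theta> > 0" for \<theta>
      using s0 se Dpos[of \<theta>] by (simp add: cdD N_def normal_density_pos)
    have ge: "(LINT \<theta>|lborel. N \<theta> * Cd \<theta>) \<ge> 0"
      using pos by (intro integral_nonneg_AE) (auto intro: less_imp_le)
    have "(LINT \<theta>|lborel. N \<theta> * Cd \<theta>) \<noteq> 0"
    proof
      assume "(LINT \<theta>|lborel. N \<theta> * Cd \<theta>) = 0"
      then have "AE \<theta> in lborel. N \<theta> * Cd \<theta> = 0"
        using integral_nonneg_eq_0_iff_AE[OF i1] pos by (auto intro: less_imp_le)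
      then have "AE \<theta>::real in lborel. False"
      proof eventually_elim
        case (elim \<theta>)
        then show False using pos[of \<theta>] by auto
      qed
      then have "emeasure lborel (UNIV::real set) = 0"
        using AE_iff_measurable[of "UNIV::real set" lborel "\<lambda>_. False"] by simp
      then show False by simp
    qed
    with ge show ?thesis by simp
  qed
  have K: "k * sqrt pi / 2 > 0" using kpos by simp
  have ReJ: "Re J = k * sqrt pi / 2 * Re (erfcx z)" and ImJ: "Im J = k * sqrt pi / 2 * Im (erfcx z)"
    by (simp_all add: Jeq)
  have "posterior_mean (normal_density \<theta>0 \<sigma>0) (cauchy_density 0 \<sigma>\<epsilon>) x
      = (LINT \<theta>|lborel. \<theta> * N \<theta> * Cd \<theta>) / (LINT \<theta>|lborel. N \<theta> * Cd \<theta>)"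
    by (simp add: posterior_mean_def N_def Cd_def)
  also have "\<dots> = (x * (Re J / pi) + \<sigma>\<epsilon> * Im J / pi) / (Re J / pi)"
    by (simp only: num den)
  also have "\<dots> = x + \<sigma>\<epsilon> * Im (erfcx z) / Re (erfcx z)"
  proof -
    have "Re J \<noteq> 0" using denpos den by (auto simp: divide_pos_pos)
    then have "Re (erfcx z) \<noteq> 0" using ReJ by simp
    then show ?thesis using K \<open>Re J \<noteq> 0\<close> unfolding ReJ ImJ by (simp add: field_simps)
  qed
  finally show ?thesis .
qed

end
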